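(* Let $p_1,\dots,p_n$ be distinct primes with $p_1\equiv 3\pmod 8$ and $p_i\equiv 5\pmod 8$ for $2\leq i\leq n$; put $d_1=4p_1$, $d_i=p_i$ for $2\leq i\leq n$, and $D=d_1\cdots d_n=4p_1\cdots p_n$. Let \[\mathcal{G}=\{a\in\mathbb{Z}: 1\leq a\leq D,\ \chi_{d_i}(a)=1\text{ for all }1\leq i\leq n\}\] and $\mathfrak{t}_1=\sum_{a\in\mathcal{G}}a^2$. Then $\mathfrak{t}_1\equiv 2^n\mathfrak{y}\pmod{16}$ for some odd integer $\mathfrak{y}$. In particular, if $n\geq 4$ then $v(\mathfrak{t}_1)\geq 4$.
   Context: For a positive integer $M$, $\chi_M(a)=\left(\frac{M}{a}\right)$ denotes the Kronecker–Jacobi symbol. $v$ denotes the $2$-adic valuation on $\mathbb{Q}$ normalized by $v(2)=1$. *)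

theory Defs
  imports "HOL-Number_Theory.Number_Theory"
begin

definition kron_prime :: "int \<Rightarrow> int \<Rightarrow> int" where
  "kron_prime M p =
     (if p = 2 then (if even M then 0 else if M mod 8 = 1 \<or> M mod 8 = 7 then 1 else -1)
      else Legendre M p)"

definition kronecker :: "int \<Rightarrow> int \<Rightarrow> int" where
  "kronecker M a =
     (if a = 0 then (if \<bar>M\<bar> = 1 then 1 else 0)
      else (if a < 0 \<and> M < 0 then -1 else 1) *
        (\<Prod>p\<in>prime_factors \<bar>a\<bar>. kron_prime M p ^ multiplicity p \<bar>a\<bar>))"

end

theory Submission
  imports Defs
begin


lemma euler_int:
  fixes p :: int assumes "prime p" "p > 2"
  shows "[Legendre a p = a ^ nat ((p - 1) div 2)] (mod p)"
proof -
  have "prime (nat p)" "2 < nat p" using assms by auto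
  from euler_criterion[OF this, of a] have "[Legendre a (int (nat p)) = a ^ ((nat p - 1) div 2)] (mod int (nat p))" .
  moreover have "(nat p - 1) div 2 = nat ((p - 1) div 2)" 
  proof -
    have "int ((nat p - 1) div 2) = (p - 1) div 2" using assms by (simp add: zdiv_int of_nat_diff)
    then show ?thesis by (metis nat_int)
  qed
  ultimately show ?thesis using assms by simp
qed

lemma Legendre_vals: "Legendre a p \<in> {-1,0,1}"
  by (auto simp: Legendre_def)

lemma Legendre_zero_iff: "Legendre a p = 0 \<longleftrightarrow> p dvd a"
  by (auto simp: Legendre_def cong_0_iff)

lemma small_cong_eq:
  fixes p x y :: int assumes "p > 2" "x \<in> {-1,0,1}" "y \<in> {-1,0,1}" "[x = y] (mod p)"
  shows "x = y"
proof -
  have "p dvd x - y" using assms(4) by (simp add: cong_iff_dvd_diff)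
  moreover have "\<bar>x - y\<bar> < p" using assms by auto
  ultimately show ?thesis
  proof (cases "x - y = 0")
    case False
    then have "\<bar>p\<bar> \<le> \<bar>x - y\<bar>" using \<open>p dvd x - y\<close> dvd_imp_le_int by blast
    then show ?thesis using \<open>\<bar>x - y\<bar> < p\<close> by simp
  qed simp
qed


lemma Legendre_mult:
  fixes p :: int assumes "prime p" "p > 2"
  shows "Legendre (a * b) p = Legendre a p * Legendre b p"
proof -
  let ?h = "nat ((p - 1) div 2)"
  have "[Legendre (a*b) p = (a*b) ^ ?h] (mod p)" by (rule euler_int[OF assms])
  moreover have "[Legendre a p * Legendre b p = a ^ ?h * b ^ ?h] (mod p)"
    using euler_int[OF assms, of a] euler_int[OF assms, of b] by (rule cong_mult)
  ultimately have "[Legendre (a*b) p = Legendre a p * Legendre b p] (mod p)"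
    unfolding power_mult_distrib by (meson cong_sym cong_trans)
  moreover have "Legendre a p * Legendre b p \<in> {-1,0,1}"
    using Legendre_vals[of a p] Legendre_vals[of b p] by auto
  ultimately show ?thesis using small_cong_eq[OF assms(2) Legendre_vals] by blast
qed


lemma Legendre_minus_one:
  fixes p :: int assumes "prime p" "p > 2"
  shows "Legendre (-1) p = (if p mod 4 = 1 then 1 else -1)"
proof -
  let ?h = "nat ((p - 1) div 2)"
  have "[Legendre (-1) p = (-1) ^ ?h] (mod p)" by (rule euler_int[OF assms])
  moreover have "odd p" using assms prime_odd_int by blast
  moreover have "((-1::int) ^ ?h) = (if p mod 4 = 1 then 1 else -1)"
  proof (cases "p mod 4 = 1")
    case True
    then obtain k where "p = 4*k+1" by (metis mod_div_mult_eq add.commute mult.commute)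
    moreover have "k \<ge> 0" using assms calculation by linarith
    ultimately have "?h = 2 * nat k" by (simp add: nat_mult_distrib)
    then have "even ?h" by simp
    then show ?thesis using True by simp
  next
    case False
    then have "p mod 4 = 3" using \<open>odd p\<close> by presburger
    then obtain k where "p = 4*k+3" by (metis mod_div_mult_eq add.commute mult.commute)
    moreover have "k \<ge> 0" using assms calculation by linarith
    ultimately have "?h = nat (2*k+1)" by simp
    then have "odd ?h" using \<open>k \<ge> 0\<close> by (simp add: even_nat_iff)
    then show ?thesis using False by simp
  qed
  ultimately have "[Legendre (-1) p = (if p mod 4 = 1 then 1 else -1)] (mod p)" by simp
  moreover have "(if p mod 4 = 1 then 1 else -1) \<in> {-1,0,(1::int)}" by simp
  ultimately show ?thesis using small_cong_eq[OF assms(2) Legendre_vals[of "-1" p]] by blast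
qed


lemma Legendre_cong:
  assumes "[a = b] (mod p)" shows "Legendre a p = Legendre b p"
proof -
  have "QuadRes p a = QuadRes p b" unfolding QuadRes_def
    using assms by (meson cong_sym cong_trans)
  moreover have "[a = 0] (mod p) = [b = 0] (mod p)" using assms by (meson cong_sym cong_trans)
  ultimately show ?thesis by (simp add: Legendre_def)
qed



lemma QR_card:
  fixes p :: int assumes "prime p" "p > 2"
  shows "card {x\<in>{0..<p}. Legendre x p = 1} = nat ((p - 1) div 2)"
proof -
  define h where "h = (p - 1) div 2"
  have "odd p" using assms prime_odd_int by blast
  then have ph: "p = 2*h + 1" unfolding h_def by presburger
  have h1: "h \<ge> 1" using assms ph by linarith
  have ndvd: "\<not> p dvd y" if "1 \<le> y" "y < p" for y
    using that zdvd_not_zless by auto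
  have eq: "{x\<in>{0..<p}. Legendre x p = 1} = (\<lambda>y. y^2 mod p) ` {1..h}"
  proof (intro equalityI subsetI)
    fix x assume "x \<in> {x\<in>{0..<p}. Legendre x p = 1}"
    then have x: "0 \<le> x" "x < p" "Legendre x p = 1" by auto
    then have nz: "\<not> [x = 0] (mod p)" and "QuadRes p x" by (auto simp: Legendre_def split: if_splits)
    then obtain y where y: "[y^2 = x] (mod p)" unfolding QuadRes_def by blast
    define z where "z = y mod p"
    have z: "0 \<le> z" "z < p" using assms unfolding z_def by auto
    have "[(y mod p)^2 = y^2] (mod p)" by (intro cong_pow) (simp add: cong_def)
    then have zc: "[z^2 = x] (mod p)" unfolding z_def by (rule cong_trans[OF _ y])
    have "z \<noteq> 0" using zc nz by (auto simp: cong_def)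
    show "x \<in> (\<lambda>y. y^2 mod p) ` {1..h}"
    proof (cases "z \<le> h")
      case True
      have "x = z^2 mod p" using zc x by (simp add: cong_def)
      then show ?thesis using True \<open>z \<noteq> 0\<close> z by auto
    next
      case False
      have "[(p - z)^2 = z^2] (mod p)"
        by (simp add: cong_iff_dvd_diff power2_eq_square algebra_simps)
      then have "[(p - z)^2 = x] (mod p)" using zc by (rule cong_trans)
      then have "x = (p-z)^2 mod p" using x by (simp add: cong_def)
      moreover have "p - z \<in> {1..h}" using False z ph by auto
      ultimately show ?thesis by blast
    qed
  next
    fix x assume "x \<in> (\<lambda>y. y^2 mod p) ` {1..h}"
    then obtain y where y: "1 \<le> y" "y \<le> h" "x = y^2 mod p" by auto
    have "0 \<le> x" "x < p" using y assms by auto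
    moreover have "\<not> p dvd y" using ndvd[of y] y ph by auto
    then have "\<not> p dvd y^2" using prime_dvd_power_iff[OF assms(1), of 2 y] by simp
    then have "x \<noteq> 0" using y(3) by (simp add: dvd_eq_mod_eq_0)
    then have "\<not> [x = 0] (mod p)" using \<open>0 \<le> x\<close> \<open>x < p\<close> by (simp add: cong_def)
    moreover have "QuadRes p x" unfolding QuadRes_def using y by (auto simp: cong_def)
    ultimately show "x \<in> {x\<in>{0..<p}. Legendre x p = 1}" by (simp add: Legendre_def)
  qed
  have inj: "inj_on (\<lambda>y. y^2 mod p) {1..h}"
  proof (rule inj_onI)
    fix a b assume a: "a \<in> {1..h}" and b: "b \<in> {1..h}" and e: "a^2 mod p = b^2 mod p"
    then have "p dvd a^2 - b^2" by (simp add: mod_eq_dvd_iff)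
    moreover have "a^2 - b^2 = (a - b) * (a + b)" by (simp add: power2_eq_square algebra_simps)
    ultimately have "p dvd (a - b) * (a + b)" by simp
    then have "p dvd (a - b) \<or> p dvd (a + b)" using assms prime_dvd_mult_iff by blast
    moreover have "\<not> p dvd (a + b)" using ndvd[of "a+b"] a b ph by auto
    ultimately have "p dvd (a - b)" by blast
    moreover have "\<bar>a - b\<bar> < p" using a b ph by auto
    ultimately show "a = b"
    proof (cases "a - b = 0")
      case False
      then have "\<bar>p\<bar> \<le> \<bar>a - b\<bar>" using \<open>p dvd a - b\<close> dvd_imp_le_int by blast
      then show ?thesis using \<open>\<bar>a - b\<bar> < p\<close> by simp
    qed simp
  qed
  show ?thesis unfolding eq card_image[OF inj] h_def[symmetric] by simp
qed

lemma NQR_card: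
  fixes p :: int assumes "prime p" "p > 2"
  shows "card {x\<in>{0..<p}. Legendre x p = -1} = nat ((p - 1) div 2)"
proof -
  let ?A = "{x\<in>{0..<p}. Legendre x p = 1}"
  let ?B = "{x\<in>{0..<p}. Legendre x p = -1}"
  have "{1..<p} = ?A \<union> ?B"
  proof -
    have nz: "Legendre x p \<noteq> 0" if "x \<in> {1..<p}" for x
      using that Legendre_zero_iff zdvd_not_zless by auto
    moreover have "Legendre 0 p = 0" by (simp add: Legendre_zero_iff)
    ultimately show ?thesis
    proof (intro equalityI subsetI)
      fix x assume "x \<in> {1..<p}"
      then have "Legendre x p \<noteq> 0" "Legendre x p \<in> {-1,0,1}" using Legendre_vals nz by auto
      then show "x \<in> ?A \<union> ?B" using \<open>x \<in> {1..<p}\<close> by auto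
    next
      fix x assume "x \<in> ?A \<union> ?B"
      moreover have "x \<noteq> 0" using calculation \<open>Legendre 0 p = 0\<close> by auto
      ultimately show "x \<in> {1..<p}" by auto
    qed
  qed
  moreover have "?A \<inter> ?B = {}" by auto
  moreover have "finite ?A" "finite ?B" by (rule finite_subset[of _ "{0..<p}"], auto)+
  ultimately have "card {1..<p} = card ?A + card ?B"
    using card_Un_disjoint[of ?A ?B] by simp
  then have "nat (p - 1) = nat ((p - 1) div 2) + card ?B" using QR_card[OF assms] by simp
  moreover have "odd p" using assms prime_odd_int by blast
  moreover have "nat (p - 1) = nat ((p - 1) div 2) + nat ((p - 1) div 2)"
    using \<open>odd p\<close> assms by (auto elim!: oddE)
  ultimately show ?thesis by linarith
qed



lemma crt_card:
  fixes m q :: int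
  assumes "m > 0" "q > 0" "coprime m q" "\<And>x. P x = P (x mod m)" "\<And>x. Q x = Q (x mod q)"
  shows "card {x\<in>{0..<m*q}. P x \<and> Q x} = card {x\<in>{0..<m}. P x} * card {x\<in>{0..<q}. Q x}"
proof -
  have "bij_betw (\<lambda>x. (x mod m, x mod q)) {x\<in>{0..<m*q}. P x \<and> Q x}
          ({x\<in>{0..<m}. P x} \<times> {x\<in>{0..<q}. Q x})"
    unfolding bij_betw_def
  proof
    show "inj_on (\<lambda>x. (x mod m, x mod q)) {x\<in>{0..<m*q}. P x \<and> Q x}"
    proof (rule inj_onI)
      fix x y assume x: "x \<in> {x\<in>{0..<m*q}. P x \<and> Q x}" and y: "y \<in> {x\<in>{0..<m*q}. P x \<and> Q x}"
        and e: "(x mod m, x mod q) = (y mod m, y mod q)"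
      then have "[x = y] (mod m)" "[x = y] (mod q)" by (auto simp: cong_def)
      then have "[x = y] (mod m * q)" using assms(3) by (rule coprime_cong_mult)
      then have "x mod (m*q) = y mod (m*q)" by (simp add: cong_def)
      moreover have "x mod (m*q) = x" "y mod (m*q) = y" using x y by auto
      ultimately show "x = y" by simp
    qed
  next
    show "(\<lambda>x. (x mod m, x mod q)) ` {x\<in>{0..<m*q}. P x \<and> Q x} = {x\<in>{0..<m}. P x} \<times> {x\<in>{0..<q}. Q x}"
    proof (intro equalityI subsetI)
      fix z assume "z \<in> (\<lambda>x. (x mod m, x mod q)) ` {x\<in>{0..<m*q}. P x \<and> Q x}"
      then obtain x where x: "x \<in> {x\<in>{0..<m*q}. P x \<and> Q x}" and z: "z = (x mod m, x mod q)" by auto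
      then show "z \<in> {x\<in>{0..<m}. P x} \<times> {x\<in>{0..<q}. Q x}"
        using assms(1,2) assms(4)[of x] assms(5)[of x] by auto
    next
      fix z assume z: "z \<in> {x\<in>{0..<m}. P x} \<times> {x\<in>{0..<q}. Q x}"
      obtain a b where ab: "z = (a, b)" by (cases z)
      obtain x where x: "[x = a] (mod m)" "[x = b] (mod q)"
        using binary_chinese_remainder_int[OF assms(3)] by blast
      define w where "w = x mod (m*q)"
      have a: "0 \<le> a" "a < m" "P a" and b: "0 \<le> b" "b < q" "Q b" using z ab by auto
      have "w mod m = x mod m" unfolding w_def by (simp add: mod_mod_cancel)
      also have "\<dots> = a mod m" using x(1) by (simp add: cong_def)
      also have "\<dots> = a" using a by simp
      finally have w1: "w mod m = a" .
      have "w mod q = x mod q" unfolding w_def by (simp add: mod_mod_cancel)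
      also have "\<dots> = b mod q" using x(2) by (simp add: cong_def)
      also have "\<dots> = b" using b by simp
      finally have w2: "w mod q = b" .
      have "0 \<le> w" "w < m*q" unfolding w_def using assms(1,2) by auto
      moreover have "P w" "Q w" using assms(4)[of w] assms(5)[of w] w1 w2 a b by auto
      ultimately show "z \<in> (\<lambda>x. (x mod m, x mod q)) ` {x\<in>{0..<m*q}. P x \<and> Q x}"
        using ab w1 w2 by (auto intro!: image_eqI[of _ _ w])
    qed
  qed
  then have "card {x\<in>{0..<m*q}. P x \<and> Q x} = card ({x\<in>{0..<m}. P x} \<times> {x\<in>{0..<q}. Q x})"
    by (rule bij_betw_same_card)
  then show ?thesis by (simp add: card_cartesian_product)
qed

lemma shift_card:
  fixes m :: int
  assumes "m > 0" "\<And>x. P x = P (x mod m)"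
  shows "card {x\<in>{1..m}. P x} = card {x\<in>{0..<m}. P x}"
proof -
  have "bij_betw (\<lambda>x. x mod m) {x\<in>{1..m}. P x} {x\<in>{0..<m}. P x}"
    unfolding bij_betw_def
  proof
    show "inj_on (\<lambda>x. x mod m) {x\<in>{1..m}. P x}"
    proof (rule inj_onI)
      fix x y assume x: "x \<in> {x\<in>{1..m}. P x}" and y: "y \<in> {x\<in>{1..m}. P x}" and e: "x mod m = y mod m"
      have x1: "1 \<le> x" "x \<le> m" and y1: "1 \<le> y" "y \<le> m" using x y by auto
      have xm: "x mod m = (if x = m then 0 else x)" using x1 by auto
      have ym: "y mod m = (if y = m then 0 else y)" using y1 by auto
      show "x = y" using e xm ym x1 y1 by (auto split: if_splits)
    qed
  next
    show "(\<lambda>x. x mod m) ` {x\<in>{1..m}. P x} = {x\<in>{0..<m}. P x}"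
    proof (intro equalityI subsetI)
      fix z assume "z \<in> (\<lambda>x. x mod m) ` {x\<in>{1..m}. P x}"
      then obtain x where "x \<in> {x\<in>{1..m}. P x}" "z = x mod m" by auto
      then show "z \<in> {x\<in>{0..<m}. P x}" using assms(1) assms(2)[of x] by auto
    next
      fix z assume z: "z \<in> {x\<in>{0..<m}. P x}"
      show "z \<in> (\<lambda>x. x mod m) ` {x\<in>{1..m}. P x}"
      proof (cases "z = 0")
        case True
        then have "P m" using z assms(2)[of m] by simp
        then show ?thesis using True assms(1) by (auto intro!: image_eqI[of _ _ m])
      next
        case False
        then show ?thesis using z by (auto intro!: image_eqI[of _ _ z])
      qed
    qed
  qed
  then show ?thesis by (rule bij_betw_same_card)
qed



lemma g_prod:
  fixes g :: "int \<Rightarrow> int"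
  assumes mult: "\<And>x y. x > 0 \<Longrightarrow> y > 0 \<Longrightarrow> odd x \<Longrightarrow> odd y \<Longrightarrow> g (x*y) = g x * g y"
    and g1: "g 1 = 1"
  shows "finite A \<Longrightarrow> (\<forall>q\<in>A. q > 0 \<and> odd q) \<Longrightarrow>
    g (\<Prod>q\<in>A. q ^ e q) = (\<Prod>q\<in>A. g q ^ e q) \<and> (\<Prod>q\<in>A. q ^ e q) > 0 \<and> odd (\<Prod>q\<in>A. q ^ e q)"
proof (induction A rule: finite_induct)
  case empty
  then show ?case using g1 by simp
next
  case (insert q A)
  have q: "q > 0" "odd q" using insert by auto
  have pw: "g (q ^ k) = g q ^ k \<and> q ^ k > 0 \<and> odd (q ^ k)" for k
  proof (induction k)
    case 0 then show ?case using g1 by simp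
  next
    case (Suc k)
    then have "g (q * q ^ k) = g q * g (q ^ k)" using mult q by blast
    then show ?case using Suc q by simp
  qed
  have IH: "g (\<Prod>q\<in>A. q ^ e q) = (\<Prod>q\<in>A. g q ^ e q)" "(\<Prod>q\<in>A. q ^ e q) > 0" "odd (\<Prod>q\<in>A. q ^ e q)"
    using insert by auto
  have "g (q ^ e q * (\<Prod>q\<in>A. q ^ e q)) = g (q ^ e q) * g (\<Prod>q\<in>A. q ^ e q)"
    using mult pw[of "e q"] IH by blast
  then show ?case using insert pw[of "e q"] IH by simp
qed

lemma kron_eq_g:
  fixes g :: "int \<Rightarrow> int" and M a :: int
  assumes mult: "\<And>x y. x > 0 \<Longrightarrow> y > 0 \<Longrightarrow> odd x \<Longrightarrow> odd y \<Longrightarrow> g (x*y) = g x * g y"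
    and g1: "g 1 = 1" and a: "a > 0" "odd a"
    and agree: "\<And>q. q \<in> prime_factors a \<Longrightarrow> kron_prime M q = g q"
  shows "kronecker M a = g a"
proof -
  have "kronecker M a = (\<Prod>q\<in>prime_factors a. kron_prime M q ^ multiplicity q a)"
    using a by (simp add: kronecker_def)
  also have "\<dots> = (\<Prod>q\<in>prime_factors a. g q ^ multiplicity q a)"
    using agree by simp
  also have "\<dots> = g (\<Prod>q\<in>prime_factors a. q ^ multiplicity q a)"
  proof -
    have "\<forall>q\<in>prime_factors a. q > 0 \<and> odd q"
    proof
      fix q assume "q \<in> prime_factors a"
      then have "prime q" "q dvd a" by auto
      then show "q > 0 \<and> odd q" using a prime_gt_0_int by (auto dest: dvd_trans)
    qed
    then show ?thesis using g_prod[OF mult g1, of "prime_factors a" "\<lambda>q. multiplicity q a"] by auto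
  qed
  also have "(\<Prod>q\<in>prime_factors a. q ^ multiplicity q a) = a"
    using prod_prime_factors[of a] a by simp
  finally show ?thesis .
qed

lemma kron_even:
  fixes M a :: int
  assumes "a > 0" "even a" "even M"
  shows "kronecker M a = 0"
proof -
  have "2 \<in> prime_factors a" using assms by (auto intro: prime_factorsI)
  moreover have "multiplicity 2 a > 0" using assms
    by (simp add: prime_multiplicity_gt_zero_iff)
  ultimately have "\<exists>q\<in>prime_factors a. kron_prime M q ^ multiplicity q a = 0"
    using assms by (auto intro!: bexI[of _ 2] simp: kron_prime_def)
  then have "(\<Prod>q\<in>prime_factors a. kron_prime M q ^ multiplicity q a) = 0"
    by (simp add: prod_zero_iff)
  then show ?thesis using assms by (simp add: kronecker_def)
qed

lemma Legendre_one: "p > 1 \<Longrightarrow> Legendre 1 p = 1"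
  unfolding Legendre_def QuadRes_def
  by (auto simp: cong_def intro: exI[of _ 1])

lemma Legendre_sq:
  fixes p q :: int assumes "prime p" "prime q" "p \<noteq> q"
  shows "Legendre q p ^ 2 = 1"
proof -
  have "\<not> p dvd q" using assms primes_dvd_imp_eq by (metis prime_gt_0_int pos_int_cases)
  then have "Legendre q p \<noteq> 0" by (simp add: Legendre_zero_iff)
  then show ?thesis using Legendre_vals[of q p] by auto
qed

lemma neg_one_pow_nat:
  fixes k :: int assumes "k \<ge> 0"
  shows "(-1::int) ^ nat k = (if even k then 1 else -1)"
  using assms by (simp add: even_nat_iff)

lemma reciprocity_pair:
  fixes p q :: int assumes "prime p" "prime q" "p > 2" "q > 2" "p \<noteq> q"
  shows "Legendre p q * Legendre q p = (if even ((p - 1) div 2 * ((q - 1) div 2)) then 1 else -1)"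
proof -
  have "Legendre p q * Legendre q p = (-1::int) ^ (nat ((p - 1) div 2 * ((q - 1) div 2)))"
    using Quadratic_Reciprocity_int[of p q] assms by simp
  also have "\<dots> = (if even ((p - 1) div 2 * ((q - 1) div 2)) then 1 else -1)"
    using assms by (intro neg_one_pow_nat) simp
  finally show ?thesis .
qed



definition eps :: "int \<Rightarrow> int" where "eps x = (if x mod 4 = 1 then 1 else -1)"

lemma eps_mult: "odd x \<Longrightarrow> odd y \<Longrightarrow> eps (x * y) = eps x * eps y"
proof -
  assume "odd x" "odd y"
  then have "x mod 4 = 1 \<or> x mod 4 = 3" "y mod 4 = 1 \<or> y mod 4 = 3" by presburger+
  moreover have "(x * y) mod 4 = ((x mod 4) * (y mod 4)) mod 4" by (simp add: mod_mult_eq)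
  ultimately show ?thesis unfolding eps_def by auto
qed

lemma kron_d1:
  fixes p1 a :: int
  assumes p1: "prime p1" "p1 mod 4 = 3" and a: "a > 0" "odd a"
  shows "kronecker (4 * p1) a = Legendre a p1 * eps a"
proof (rule kron_eq_g[OF _ _ a])
  have p12: "p1 > 2" using p1 prime_ge_2_int[of p1] by (cases "p1 = 2") auto
  show "Legendre (x * y) p1 * eps (x * y) = Legendre x p1 * eps x * (Legendre y p1 * eps y)"
    if "x > 0" "y > 0" "odd x" "odd y" for x y
    using Legendre_mult[OF p1(1) p12] eps_mult[OF that(3,4)] by simp
  show "Legendre 1 p1 * eps 1 = 1" using p12 Legendre_one by (simp add: eps_def)
  fix q assume q: "q \<in> prime_factors a"
  then have qp: "prime q" "q dvd a" by auto
  then have "odd q" using a by (auto dest: dvd_trans)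
  then have q2: "q > 2" "q \<noteq> 2" using qp prime_ge_2_int[of q] by (cases "q = 2", auto)
  have "kron_prime (4 * p1) q = Legendre (4 * p1) q" using q2 by (simp add: kron_prime_def)
  also have "\<dots> = Legendre 4 q * Legendre p1 q" by (rule Legendre_mult[OF qp(1) q2(1)])
  also have "Legendre 4 q = Legendre 2 q * Legendre 2 q" using Legendre_mult[OF qp(1) q2(1), of 2 2] by simp
  also have "Legendre 2 q * Legendre 2 q = 1"
  proof -
    have "prime (2::int)" by simp
    from Legendre_sq[OF qp(1) this] q2 show ?thesis by (simp add: power2_eq_square)
  qed
  finally have k: "kron_prime (4 * p1) q = Legendre p1 q" by simp
  show "kron_prime (4 * p1) q = Legendre q p1 * eps q"
  proof (cases "q = p1")
    case True
    then show ?thesis using k by (simp add: Legendre_zero_iff)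
  next
    case False
    have r: "Legendre p1 q * Legendre q p1 = (if even ((p1 - 1) div 2 * ((q - 1) div 2)) then 1 else -1)"
      using reciprocity_pair[OF p1(1) qp(1) p12 q2(1)] False by auto
    have "odd ((p1 - 1) div 2)" using p1(2) by presburger
    then have "even ((p1 - 1) div 2 * ((q - 1) div 2)) \<longleftrightarrow> q mod 4 = 1" using \<open>odd q\<close> by presburger
    then have r2: "Legendre p1 q * Legendre q p1 = eps q" using r by (simp add: eps_def)
    have "Legendre q p1 ^ 2 = 1" using Legendre_sq[OF p1(1) qp(1)] False by auto
    then have "Legendre p1 q = Legendre p1 q * Legendre q p1 * Legendre q p1" by (simp add: power2_eq_square)
    then show ?thesis using k r2 by simp
  qed
qed

lemma kron_pi:
  fixes p a :: int
  assumes p: "prime p" "p mod 4 = 1" and a: "a > 0" "odd a"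
  shows "kronecker p a = Legendre a p"
proof (rule kron_eq_g[OF _ _ a])
  have p2: "p > 2" using p prime_ge_2_int[of p] by (cases "p = 2") auto
  show "Legendre (x * y) p = Legendre x p * Legendre y p" for x y
    using Legendre_mult[OF p(1) p2] by simp
  show "Legendre 1 p = 1" using p2 Legendre_one by simp
  fix q assume q: "q \<in> prime_factors a"
  then have qp: "prime q" "q dvd a" by auto
  then have "odd q" using a by (auto dest: dvd_trans)
  then have q2: "q > 2" "q \<noteq> 2" using qp prime_ge_2_int[of q] by (cases "q = 2", auto)
  have k: "kron_prime p q = Legendre p q" using q2 by (simp add: kron_prime_def)
  show "kron_prime p q = Legendre q p"
  proof (cases "q = p")
    case True
    then show ?thesis using k by simp
  next
    case False
    have r: "Legendre p q * Legendre q p = (if even ((p - 1) div 2 * ((q - 1) div 2)) then 1 else -1)"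
      using reciprocity_pair[OF p(1) qp(1) p2 q2(1)] False by auto
    have "even ((p - 1) div 2)" using p(2) by presburger
    then have r2: "Legendre p q * Legendre q p = 1" using r by simp
    have "Legendre q p ^ 2 = 1" using Legendre_sq[OF p(1) qp(1)] False by auto
    then have "Legendre p q = Legendre p q * Legendre q p * Legendre q p" by (simp add: power2_eq_square)
    then show ?thesis using k r2 by simp
  qed
qed



definition Phi :: "(nat \<Rightarrow> int) \<Rightarrow> nat set \<Rightarrow> int \<Rightarrow> bool" where
  "Phi p I x \<longleftrightarrow> odd x \<and> Legendre x (p 1) * eps x = 1 \<and> (\<forall>i\<in>I. Legendre x (p i) = 1)"

lemma Phi_period:
  fixes M x :: int
  assumes "4 dvd M" "p 1 dvd M" "\<forall>i\<in>I. p i dvd M"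
  shows "Phi p I x = Phi p I (x mod M)"
proof -
  have c: "[x mod M = x] (mod d)" if "d dvd M" for d
    using cong_dvd_modulus[OF _ that, of "x mod M" x] by (simp add: cong_def)
  have L: "Legendre (x mod M) (p i) = Legendre x (p i)" if "p i dvd M" for i
    using Legendre_cong[OF c[OF that]] .
  have m4: "(x mod M) mod 4 = x mod 4" using assms(1) by (simp add: mod_mod_cancel)
  have "2 dvd M" using assms(1) by (metis dvd_trans even_numeral)
  then have m2: "(x mod M) mod 2 = x mod 2" by (simp add: mod_mod_cancel)
  have "odd (x mod M) = odd x" using m2 by (simp add: odd_iff_mod_2_eq_one)
  moreover have "eps (x mod M) = eps x" using m4 by (simp add: eps_def)
  ultimately show ?thesis unfolding Phi_def using L assms(2,3) by auto
qed

lemma Lmod: "Legendre (x mod m) m = Legendre x m"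
  by (rule Legendre_cong) (simp add: cong_def)

lemma count_lemma:
  fixes n :: nat and p :: "nat \<Rightarrow> int"
  assumes inj: "inj_on p {1..n}" and pr: "\<forall>i\<in>{1..n}. prime (p i)" and p1: "p 1 mod 8 = 3"
    and pi: "\<forall>i\<in>{2..n}. p i mod 8 = 5"
  shows "1 \<le> k \<Longrightarrow> k \<le> n \<Longrightarrow> \<exists>u. odd u \<and>
     int (card {x\<in>{0..<4 * p 1 * (\<Prod>i\<in>{2..k}. p i)}. Phi p {2..k} x}) = 2^k * u"
proof (induction k)
  case 0
  then show ?case by simp
next
  case (Suc k)
  have p1pr: "prime (p 1)" using pr Suc.prems by auto
  have p1gt: "p 1 > 2" using p1pr prime_ge_2_int[of "p 1"] p1 by (cases "p 1 = 2") auto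
  show ?case
  proof (cases "k = 0")
    case True
    let ?P = "p 1"
    have h: "4 * p 1 * (\<Prod>i\<in>{2..Suc k}. p i) = 4 * ?P" using True by simp
    have Phi1: "Phi p {2..Suc k} x \<longleftrightarrow> (x mod 4 = 1 \<and> Legendre x ?P = 1) \<or> (x mod 4 = 3 \<and> Legendre x ?P = -1)" for x
    proof -
      have "odd x \<longleftrightarrow> x mod 4 = 1 \<or> x mod 4 = 3" by presburger
      then show ?thesis using True Legendre_vals[of x ?P] unfolding Phi_def eps_def by auto
    qed
    let ?A = "{x\<in>{0..<4 * ?P}. x mod 4 = 1 \<and> Legendre x ?P = 1}"
    let ?B = "{x\<in>{0..<4 * ?P}. x mod 4 = 3 \<and> Legendre x ?P = -1}"
    have eqAB: "{x\<in>{0..<4 * p 1 * (\<Prod>i\<in>{2..Suc k}. p i)}. Phi p {2..Suc k} x} = ?A \<union> ?B"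
      unfolding h using Phi1 by auto
    have cop: "coprime 4 ?P"
    proof -
      have "\<not> ?P dvd 4"
      proof
        assume "?P dvd 4"
        then have "?P \<le> 4" by (simp add: zdvd_imp_le)
        then have "?P = 3" using p1gt p1 by auto
        then show False using \<open>?P dvd 4\<close> by simp
      qed
      then have "coprime ?P 4" using prime_imp_coprime[OF p1pr] by blast
      then show ?thesis using coprime_commute by blast
    qed
    have per4: "\<And>x. (x mod 4 = r) = ((x mod 4) mod 4 = r)" for r :: int by simp
    have perL: "\<And>x. (Legendre x ?P = s) = (Legendre (x mod ?P) ?P = s)" for s
      by (simp add: Lmod)
    have cA: "card ?A = card {x\<in>{0..<4}. x mod 4 = (1::int)} * card {x\<in>{0..<?P}. Legendre x ?P = 1}"
      using crt_card[of 4 ?P "\<lambda>x. x mod 4 = 1" "\<lambda>x. Legendre x ?P = 1", OF _ _ cop per4 perL] p1gt by simp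
    have cB: "card ?B = card {x\<in>{0..<4}. x mod 4 = (3::int)} * card {x\<in>{0..<?P}. Legendre x ?P = -1}"
      using crt_card[of 4 ?P "\<lambda>x. x mod 4 = 3" "\<lambda>x. Legendre x ?P = -1", OF _ _ cop per4 perL] p1gt by simp
    have "{x\<in>{0..<4}. x mod 4 = (1::int)} = {1}" by (auto simp: mod_pos_pos_trivial)
    moreover have "{x\<in>{0..<4}. x mod 4 = (3::int)} = {3}" by (auto simp: mod_pos_pos_trivial)
    ultimately have cA': "card ?A = nat ((?P - 1) div 2)" and cB': "card ?B = nat ((?P - 1) div 2)"
      using cA cB QR_card[OF p1pr p1gt] NQR_card[OF p1pr p1gt] by auto
    have "finite ?A" "finite ?B" by (rule finite_subset[of _ "{0..<4 * ?P}"], auto)+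
    moreover have "?A \<inter> ?B = {}" by auto
    ultimately have "card (?A \<union> ?B) = card ?A + card ?B" by (simp add: card_Un_disjoint)
    then have "int (card (?A \<union> ?B)) = 2 * ((?P - 1) div 2)" using cA' cB' p1gt by simp
    moreover have "odd ((?P - 1) div 2)" using p1 by presburger
    ultimately show ?thesis using eqAB True by (auto intro!: exI[of _ "(?P - 1) div 2"])
  next
    case False
    then have k1: "1 \<le> k" "k \<le> n" using Suc.prems by auto
    obtain u where u: "odd u" "int (card {x\<in>{0..<4 * p 1 * (\<Prod>i\<in>{2..k}. p i)}. Phi p {2..k} x}) = 2^k * u"
      using Suc.IH k1 by blast
    let ?q = "p (Suc k)"
    let ?M = "4 * p 1 * (\<Prod>i\<in>{2..k}. p i)"
    have ins: "{2..Suc k} = insert (Suc k) {2..k}" using k1 by auto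
    have Mq: "4 * p 1 * (\<Prod>i\<in>{2..Suc k}. p i) = ?M * ?q" unfolding ins by simp
    have qpr: "prime ?q" using pr Suc.prems by auto
    have q5: "?q mod 8 = 5" using pi Suc.prems k1 by auto
    have qgt: "?q > 2" using qpr prime_ge_2_int[of ?q] q5 by (cases "?q = 2") auto
    have pipos: "p i > 0" if "i \<in> {2..k}" for i using pr that k1 prime_gt_0_int by auto
    have "(\<Prod>i\<in>{2..k}. p i) > 0" using pipos by (rule prod_pos)
    then have Mpos: "?M > 0" using p1gt by simp
    have PhiS: "Phi p {2..Suc k} x \<longleftrightarrow> Phi p {2..k} x \<and> Legendre x ?q = 1" for x
      unfolding Phi_def ins by auto
    have cop: "coprime ?M ?q"
    proof -
      have "\<not> ?q dvd ?M"
      proof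
        assume "?q dvd ?M"
        then have "?q dvd 4 \<or> ?q dvd p 1 \<or> ?q dvd (\<Prod>i\<in>{2..k}. p i)"
          using qpr by (simp add: prime_dvd_mult_iff)
        moreover have "\<not> ?q dvd 4"
        proof
          assume "?q dvd 4" then have "?q \<le> 4" by (simp add: zdvd_imp_le)
          then show False using q5 qgt by auto
        qed
        moreover have "\<not> ?q dvd p 1"
        proof
          assume "?q dvd p 1"
          then have "?q = p 1" using primes_dvd_imp_eq qpr p1pr by (metis prime_gt_0_int pos_int_cases)
          moreover have "Suc k \<in> {1..n}" "(1::nat) \<in> {1..n}" "Suc k \<noteq> 1" using Suc.prems k1 by auto
          ultimately show False using inj unfolding inj_on_def by blast
        qed
        moreover have "\<not> ?q dvd (\<Prod>i\<in>{2..k}. p i)"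
        proof
          assume "?q dvd (\<Prod>i\<in>{2..k}. p i)"
          then obtain i where i: "i \<in> {2..k}" "?q dvd p i" using qpr by (auto simp: prime_dvd_prod_iff)
          then have "prime (p i)" using pr k1 by auto
          then have "?q = p i" using i primes_dvd_imp_eq qpr by (metis prime_gt_0_int pos_int_cases)
          moreover have "Suc k \<in> {1..n}" "i \<in> {1..n}" "Suc k \<noteq> i" using Suc.prems k1 i by auto
          ultimately show False using inj unfolding inj_on_def by blast
        qed
        ultimately show False by blast
      qed
      then have "coprime ?q ?M" using prime_imp_coprime[OF qpr] by blast
      then show ?thesis using coprime_commute by blast
    qed
    have perPhi: "\<And>x. Phi p {2..k} x = Phi p {2..k} (x mod ?M)"
    proof (rule Phi_period)
      show "4 dvd ?M" by simp
      show "p 1 dvd ?M" by simp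
      show "\<forall>i\<in>{2..k}. p i dvd ?M"
      proof
        fix i assume "i \<in> {2..k}"
        then have "p i dvd (\<Prod>i\<in>{2..k}. p i)" by (intro dvd_prodI) auto
        then show "p i dvd ?M" by (simp add: dvd_mult)
      qed
    qed
    have perL: "\<And>x. (Legendre x ?q = 1) = (Legendre (x mod ?q) ?q = 1)"
      by (simp add: Lmod)
    have "card {x\<in>{0..<?M * ?q}. Phi p {2..k} x \<and> Legendre x ?q = 1}
          = card {x\<in>{0..<?M}. Phi p {2..k} x} * card {x\<in>{0..<?q}. Legendre x ?q = 1}"
      by (rule crt_card[of ?M ?q "Phi p {2..k}" "\<lambda>x. Legendre x ?q = 1", OF Mpos _ cop perPhi perL]) (use qgt in simp)
    then have c: "int (card {x\<in>{0..<4 * p 1 * (\<Prod>i\<in>{2..Suc k}. p i)}. Phi p {2..Suc k} x})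
         = 2^k * u * ((?q - 1) div 2)"
      unfolding Mq PhiS using u QR_card[OF qpr qgt] qgt by simp
    obtain w where w: "(?q - 1) div 2 = 2 * w" "odd w"
    proof -
      have "(?q - 1) div 2 = 2 * ((?q - 1) div 4)" using q5 by presburger
      moreover have "odd ((?q - 1) div 4)" using q5 by presburger
      ultimately show ?thesis using that by blast
    qed
    show ?thesis using c w u by (auto intro!: exI[of _ "u * w"])
  qed
qed



lemma sq_mod16: "(x::int)^2 mod 16 = (x mod 8)^2 mod 16"
proof -
  define k r where "k = x div 8" and "r = x mod 8"
  have "x = 8*k + r" unfolding k_def r_def by simp
  then have "x^2 = r^2 + 16*(4*k^2 + k*r)" by (simp add: power2_eq_square algebra_simps)
  then have "x^2 mod 16 = (r^2 + 16*(4*k^2 + k*r)) mod 16" by simp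
  also have "\<dots> = r^2 mod 16" by (rule mod_mult_self2)
  finally show ?thesis unfolding r_def .
qed

lemma pair16:
  fixes a D :: int assumes "odd a" "D mod 8 = 4"
  shows "a^2 mod 16 + (D - a)^2 mod 16 = 10"
proof -
  have "(D - a) mod 8 = (D mod 8 - a mod 8) mod 8" by (simp add: mod_diff_eq)
  then have e: "(D - a) mod 8 = (4 - a mod 8) mod 8" using assms(2) by simp
  have "a mod 8 = 1 \<or> a mod 8 = 3 \<or> a mod 8 = 5 \<or> a mod 8 = 7" using assms(1) by presburger
  then show ?thesis
    using e sq_mod16[of a] sq_mod16[of "D - a"] by auto
qed

lemma odd_prod_primes:
  fixes p :: "nat \<Rightarrow> int"
  assumes "finite I" "\<forall>i\<in>I. prime (p i) \<and> odd (p i)"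
  shows "odd (\<Prod>i\<in>I. p i)"
proof
  assume "even (\<Prod>i\<in>I. p i)"
  then have "(2::int) dvd (\<Prod>i\<in>I. p i)" by simp
  then obtain i where "i \<in> I" "2 dvd p i" using assms(1) by (auto simp: prime_dvd_prod_iff)
  then show False using assms(2) by auto
qed



theorem lemma3p10:
  fixes n :: nat and p :: "nat \<Rightarrow> int" and d :: "nat \<Rightarrow> int" and D :: int
    and G :: "int set" and t1 :: int
  assumes "n \<ge> 1"
    and "inj_on p {1..n}"
    and "\<forall>i\<in>{1..n}. prime (p i)"
    and "p 1 mod 8 = 3"
    and "\<forall>i\<in>{2..n}. p i mod 8 = 5"
    and "d 1 = 4 * p 1"
    and "\<forall>i\<in>{2..n}. d i = p i"
    and "D = (\<Prod>i\<in>{1..n}. d i)"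
    and "G = {a. 1 \<le> a \<and> a \<le> D \<and> (\<forall>i\<in>{1..n}. kronecker (d i) a = 1)}"
    and "t1 = (\<Sum>a\<in>G. a ^ 2)"
  shows "(\<exists>y. odd y \<and> [t1 = 2 ^ n * y] (mod 16)) \<and> (n \<ge> 4 \<longrightarrow> 2 ^ 4 dvd t1)"
proof -
  have p1pr: "prime (p 1)" using assms(1,3) by auto
  have p1gt: "p 1 > 2" using p1pr prime_ge_2_int[of "p 1"] assms(4) by (cases "p 1 = 2") auto
  have p14: "p 1 mod 4 = 3" using assms(4) by presburger
  have pipr: "prime (p i)" "p i mod 4 = 1" "p i > 2" if "i \<in> {2..n}" for i
  proof -
    show "prime (p i)" using assms(3) that by auto
    have "p i mod 8 = 5" using assms(5) that by auto
    then show "p i mod 4 = 1" by presburger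
    then show "p i > 2" using \<open>prime (p i)\<close> prime_ge_2_int[of "p i"] by (cases "p i = 2") auto
  qed
  define Q where "Q = (\<Prod>i\<in>{2..n}. p i)"
  have ins: "{1..n} = insert 1 {2..n}" using assms(1) by auto
  have DQ: "D = 4 * p 1 * Q"
  proof -
    have "D = d 1 * (\<Prod>i\<in>{2..n}. d i)" unfolding assms(8) ins by simp
    also have "(\<Prod>i\<in>{2..n}. d i) = Q" unfolding Q_def using assms(7) by (intro prod.cong) auto
    finally show ?thesis using assms(6) by simp
  qed
  have Qpos: "Q > 0" unfolding Q_def using pipr(3) by (intro prod_pos) fastforce
  have Qodd: "odd Q" unfolding Q_def
    using pipr(1,3) prime_odd_int by (intro odd_prod_primes) auto
  have Dpos: "D > 0" using DQ Qpos p1gt by simp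
  have D8: "D mod 8 = 4"
  proof -
    have "odd (p 1 * Q)" using Qodd p14 by presburger
    then obtain j where "p 1 * Q = 2 * j + 1" by (meson oddE)
    then have "D = 8 * j + 4" using DQ by simp
    then show ?thesis by simp
  qed
  have Gc0: "a \<in> G \<longleftrightarrow> a \<in> {a\<in>{1..D}. Phi p {2..n} a}" for a
    proof (cases "1 \<le> a")
      case False then show ?thesis using assms(9) by auto
    next
      case a1: True
      show ?thesis
      proof (cases "odd a")
        case False
        have "kronecker (d 1) a = 0" using assms(6) False a1 by (intro kron_even) auto
        moreover have "(1::nat) \<in> {1..n}" using assms(1) by simp
        ultimately have "\<not> (\<forall>i\<in>{1..n}. kronecker (d i) a = 1)" by force
        then show ?thesis using assms(9) False by (auto simp: Phi_def)
      next
        case True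
        have k1: "kronecker (d 1) a = Legendre a (p 1) * eps a"
          using kron_d1[OF p1pr p14] a1 True assms(6) by simp
        have ki: "kronecker (d i) a = Legendre a (p i)" if "i \<in> {2..n}" for i
          using kron_pi[OF pipr(1,2)[OF that]] a1 True assms(7) that by simp
        have "(\<forall>i\<in>{1..n}. kronecker (d i) a = 1) \<longleftrightarrow> Phi p {2..n} a"
          unfolding ins Phi_def using k1 ki True by auto
        then show ?thesis using assms(9) a1 by auto
      qed
    qed
  have Gc: "G = {a\<in>{1..D}. Phi p {2..n} a}" using Gc0 by blast
  have perD: "\<And>x. Phi p {2..n} x = Phi p {2..n} (x mod D)"
  proof (rule Phi_period)
    show "4 dvd D" "p 1 dvd D" using DQ by auto
    show "\<forall>i\<in>{2..n}. p i dvd D"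
    proof
      fix i assume "i \<in> {2..n}"
      then have "p i dvd Q" unfolding Q_def by (intro dvd_prodI) auto
      then show "p i dvd D" using DQ by (simp add: dvd_mult)
    qed
  qed
  obtain u where u: "odd u" "int (card {x\<in>{0..<D}. Phi p {2..n} x}) = 2^n * u"
    using count_lemma[OF assms(2,3,4,5), of n] assms(1) DQ Q_def by auto
  have cardG: "int (card G) = 2^n * u"
    using shift_card[of D "Phi p {2..n}", OF Dpos perD] u Gc by simp
  have sym: "D - a \<in> G" if aG: "a \<in> G" for a
  proof -
    have a: "1 \<le> a" "a \<le> D" "Phi p {2..n} a" using aG Gc by auto
    then have ao: "odd a" unfolding Phi_def by simp
    have "a \<noteq> D" using ao D8 by presburger
    then have r: "1 \<le> D - a" "D - a \<le> D" using a by auto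
    have Lm: "Legendre (D - a) q = - Legendre a q * Legendre (-1) q * (-1)" if "q dvd D" "prime q" "q > 2" for q
    proof -
      have "[D - a = -1 * a] (mod q)" using that(1) by (simp add: cong_iff_dvd_diff)
      then have "Legendre (D - a) q = Legendre (-1 * a) q" by (rule Legendre_cong)
      also have "\<dots> = Legendre (-1) q * Legendre a q" using Legendre_mult[OF that(2,3)] by blast
      finally show ?thesis by simp
    qed
    have "Legendre (D - a) (p 1) = - Legendre a (p 1)"
      using Lm[of "p 1"] DQ p1pr p1gt Legendre_minus_one[OF p1pr p1gt] p14 by simp
    moreover have "eps (D - a) = - eps a"
    proof -
      have "(D - a) mod 4 = (D mod 4 - a mod 4) mod 4" by (simp add: mod_diff_eq)
      moreover have "D mod 4 = 0" using DQ by simp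
      moreover have "a mod 4 = 1 \<or> a mod 4 = 3" using ao by presburger
      ultimately show ?thesis unfolding eps_def by auto
    qed
    moreover have "Legendre (D - a) (p i) = Legendre a (p i)" if "i \<in> {2..n}" for i
    proof -
      have "p i dvd D" using perD that DQ unfolding Q_def
        by (metis dvd_mult dvd_prodI finite_atLeastAtMost)
      then show ?thesis using Lm[of "p i"] pipr[OF that] Legendre_minus_one[OF pipr(1,3)[OF that]] by simp
    qed
    moreover have "odd (D - a)" using ao D8 by presburger
    ultimately have "Phi p {2..n} (D - a)" using a(3) unfolding Phi_def by auto
    then show ?thesis using Gc r by auto
  qed
  have finG: "finite G" unfolding Gc by (rule finite_subset[of _ "{1..D}"]) auto
  define S where "S = (\<Sum>a\<in>G. a^2 mod 16)"
  have S2: "(\<Sum>a\<in>G. (D - a)^2 mod 16) = S" unfolding S_def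
  proof (rule sum.reindex_bij_witness[of _ "\<lambda>a. D - a" "\<lambda>a. D - a"])
    show "\<And>a. a \<in> G \<Longrightarrow> D - (D - a) = a" by simp
    show "\<And>a. a \<in> G \<Longrightarrow> D - a \<in> G" using sym by blast
    show "\<And>a. a \<in> G \<Longrightarrow> D - (D - a) = a" by simp
    show "\<And>a. a \<in> G \<Longrightarrow> D - a \<in> G" using sym by blast
    show "\<And>a. a \<in> G \<Longrightarrow> (D - a)^2 mod 16 = (D - a)^2 mod 16" by simp
  qed
  have "S + S = (\<Sum>a\<in>G. a^2 mod 16 + (D - a)^2 mod 16)"
    using S2 unfolding S_def by (simp add: sum.distrib)
  also have "\<dots> = (\<Sum>a\<in>G. 10)"
  proof (rule sum.cong)
    fix a assume "a \<in> G"
    then have "odd a" using Gc by (auto simp: Phi_def)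
    then show "a^2 mod 16 + (D - a)^2 mod 16 = 10" using pair16 D8 by blast
  qed simp
  finally have "S = 5 * int (card G)" by simp
  have "t1 mod 16 = S mod 16" unfolding assms(10) S_def by (simp add: mod_sum_eq)
  then have t: "t1 mod 16 = (2^n * (5 * u)) mod 16" using \<open>S = 5 * int (card G)\<close> cardG
    by (simp add: algebra_simps)
  have part1: "\<exists>y. odd y \<and> [t1 = 2 ^ n * y] (mod 16)"
    using t u(1) by (auto simp: cong_def intro!: exI[of _ "5 * u"])
  have part2: "2 ^ 4 dvd t1" if "n \<ge> 4"
  proof -
    have "(2::int)^4 dvd 2^n" using that by (rule le_imp_power_dvd)
    then have "(16::int) dvd 2^n * (5 * u)" by simp
    then have "(2^n * (5 * u)) mod 16 = 0" by presburger
    then have "t1 mod 16 = 0" using t by simp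
    then show ?thesis by (simp add: dvd_eq_mod_eq_0)
  qed
  show ?thesis using part1 part2 by blast
qed

end
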